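(* Let $r\ge 1$ be an integer and let $A$ be a finite totally ordered alphabet of digits whose smallest letter is $0$. Let $w_0,\ldots,w_{r-1}$ be $r$ non-empty words in $\mathsf{inc}(A^* )$ such that $\mathsf{s}=(w_0,\ldots,w_{r-1})^\omega$ is a purely periodic labeled signature, let $L(\mathsf{s})$ be the associated language and $\mathcal{S}=(L(\mathsf{s}),A,<)$ the associated abstract numeration system. Let $\mathcal{A}=(Q,q_0,A,\delta)$ be a deterministic finite automaton (with complete transition function $\delta:Q\times A\to Q$). For $i\in\{0,\ldots,r-1\}$ define the morphism $f_i:Q^*\to Q^*$ by $$f_i(q)=\delta(q,w_{i,0})\,\delta(q,w_{i,1})\cdots\delta(q,w_{i,|w_i|-1})\quad(q\in Q),$$ where $w_{i,j}$ is the $j$th letter of $w_i$ (indexed from $0$). Let $\mathbf{x}=x_0x_1\cdots$ be the alternating fixed point of $(f_0,\ldots,f_{r-1})$ starting with $q_0$ (i.e., with $x_0=q_0$). Then for all $n\ge 0$, $x_n=\delta(q_0,\mathrm{rep}_{\mathcal{S}}(n))$; that is, $\mathbf{x}$ is the sequence of states reached in $\mathcal{A}$ when reading the words of $L(\mathsf{s})$ in increasing radix order.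
   Context: $\mathsf{inc}(A^* )$ is the set of words over $A$ whose letters are in strictly increasing order. A purely periodic labeled signature is an infinite sequence $\mathsf{s}=(s_n)_{n\ge0}$ with $s_n=w_{n\bmod r}$, where each $w_i\in\mathsf{inc}(A^* )$ and $w_0=0y$ for some non-empty word $y$. It generates an infinite labeled tree (an "i-tree") as follows: nodes $v_0,v_1,v_2,\ldots$ are created in breadth-first order; $v_0$ is the root; the children of $v_n$ are reached by edges labeled by the letters of $s_n$ in increasing order, new children receiving the next unused indices in this order; for the root, the edge labeled $0$ is a loop from $v_0$ to itself, and the other letters of $s_0$ lead to $v_1,\ldots,v_{|s_0|-1}$; then the children of $v_1$, then of $v_2$, etc. The language $L(\mathsf{s})$ is the set of labels of paths from the root that do not start with $0$ (i.e., that do not use the loop); each node corresponds to exactly one word of $L(\mathsf{s})$, and $v_n$ corresponds to the $(n+1)$st word of $L(\mathsf{s})$ in radix order (words ordered first by length, then lexicographically). For the abstract numeration system $\mathcal{S}=(L(\mathsf{s}),A,<)$, $\mathrm{rep}_{\mathcal{S}}(n)$ is the $(n+1)$st word of $L(\mathsf{s})$ in radix order (so $\mathrm{rep}_{\mathcal{S}}(0)=\varepsilon$). An infinite word $\mathbf{x}=x_0x_1\cdots$ is an alternating fixed point of $(f_0,\ldots,f_{r-1})$ if $\mathbf{x}=f_0(x_0)f_1(x_1)\cdots f_{i\bmod r}(x_i)\cdots$. *)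

theory Defs
  imports Main
begin

definition inc_word :: "'a::linorder set \<Rightarrow> 'a list \<Rightarrow> bool" where
  "inc_word A u \<longleftrightarrow> set u \<subseteq> A \<and> sorted_wrt (<) u"

definition psig :: "nat \<Rightarrow> (nat \<Rightarrow> 'a list) \<Rightarrow> nat \<Rightarrow> 'a list" where
  "psig r w n = w (n mod r)"

(* number of new children created by node v_n (the root's loop creates none) *)
definition nchildren :: "(nat \<Rightarrow> 'a list) \<Rightarrow> nat \<Rightarrow> nat" where
  "nchildren s n = (if n = 0 then length (s 0) - 1 else length (s n))"

(* The j-th letter (0-indexed) of s_n leads, for n >= 1, to node
   1 + (number of children created by v_0..v_{n-1}) + j; at the root the
   letter s_0!0 (= 0) is a loop, the letter s_0!j (j>=1) leads to v_j. *)
definition itree_edge :: "(nat \<Rightarrow> 'a list) \<Rightarrow> nat \<Rightarrow> 'a \<Rightarrow> nat option" where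
  "itree_edge s n a =
     (if a \<in> set (s n) then
        (let j = (THE j. j < length (s n) \<and> s n ! j = a) in
          Some (if n = 0 then j else 1 + (\<Sum>k<n. nchildren s k) + j))
      else None)"

fun itree_path :: "(nat \<Rightarrow> 'a list) \<Rightarrow> nat \<Rightarrow> 'a list \<Rightarrow> nat option" where
  "itree_path s n [] = Some n"
| "itree_path s n (a # u) =
     (case itree_edge s n a of None \<Rightarrow> None | Some m \<Rightarrow> itree_path s m u)"

(* L(s): labels of paths from the root that do not start with the letter z (= 0) *)
definition itree_lang :: "'a \<Rightarrow> (nat \<Rightarrow> 'a list) \<Rightarrow> 'a list set" where
  "itree_lang z s = {u. itree_path s 0 u \<noteq> None \<and> (u = [] \<or> hd u \<noteq> z)}"

definition radix_less :: "'a::linorder list \<Rightarrow> 'a list \<Rightarrow> bool" where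
  "radix_less u v \<longleftrightarrow> (u, v) \<in> lenlex {(a, b). a < b}"

definition rep_ans :: "'a::linorder list set \<Rightarrow> nat \<Rightarrow> 'a list" where
  "rep_ans L n = (THE u. u \<in> L \<and> card {v \<in> L. radix_less v u} = n)"

definition delta_star :: "('q \<Rightarrow> 'a \<Rightarrow> 'q) \<Rightarrow> 'q \<Rightarrow> 'a list \<Rightarrow> 'q" where
  "delta_star \<delta> q u = foldl \<delta> q u"

definition alt_fixed_point :: "nat \<Rightarrow> (nat \<Rightarrow> 'q \<Rightarrow> 'q list) \<Rightarrow> (nat \<Rightarrow> 'q) \<Rightarrow> bool" where
  "alt_fixed_point r f x \<longleftrightarrow>
     (\<forall>i. f (i mod r) (x i) \<noteq> []) \<and>
     (\<forall>i j. j < length (f (i mod r) (x i)) \<longrightarrow>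
        x ((\<Sum>k<i. length (f (k mod r) (x k))) + j) = f (i mod r) (x i) ! j)"

end

theory Submission
  imports Defs
begin

lemma lex_snoc:
  assumes "(u @ [a], v @ [b]) \<in> lex R" "length u = length v"
  shows "(u, v) \<in> lex R \<or> (u = v \<and> (a, b) \<in> R)"
proof -
  from assms(1) obtain xys x y xs' ys' where
    u: "u @ [a] = xys @ x # xs'" and v: "v @ [b] = xys @ y # ys'" and r: "(x,y) \<in> R"
    unfolding lex_conv by blast
  have "length u + 1 = length xys + 1 + length xs'" using arg_cong[OF u, of length] by simp
  moreover have "length v + 1 = length xys + 1 + length ys'" using arg_cong[OF v, of length] by simp
  ultimately have len: "length xs' = length ys'" using assms(2) by simp
  show ?thesis
  proof (cases "xs' = []")
    case True
    then have "ys' = []" using len by simp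
    then show ?thesis using True u v r by simp
  next
    case False
    then have "ys' \<noteq> []" using len by auto
    have e1: "xys @ x # xs' = (xys @ x # butlast xs') @ [last xs']" using False by simp
    have e2: "xys @ y # ys' = (xys @ y # butlast ys') @ [last ys']" using \<open>ys' \<noteq> []\<close> by simp
    have "u = xys @ x # butlast xs'" using u e1 append1_eq_conv by metis
    moreover have "v = xys @ y # butlast ys'" using v e2 append1_eq_conv by metis
    moreover have "length u = length v" by (rule assms(2))
    ultimately have "(u, v) \<in> lex R" using r unfolding lex_conv by blast
    then show ?thesis by simp
  qed
qed

lemma path_append:
  "itree_path s n (u @ v) = (case itree_path s n u of None \<Rightarrow> None | Some m \<Rightarrow> itree_path s m v)"
  by (induction u arbitrary: n) (auto split: option.split)

lemma path_snoc:
  "itree_path s n (u @ [a]) = Some m \<longleftrightarrow> (\<exists>k. itree_path s n u = Some k \<and> itree_edge s k a = Some m)"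
  by (auto simp: path_append split: option.splits)

lemma radix_total: "(u::'a::linorder list) \<noteq> v \<Longrightarrow> radix_less u v \<or> radix_less v u"
proof -
  assume uv: "u \<noteq> v"
  have "total {(a::'a, b). a < b}" unfolding total_on_def by auto
  then have t: "total (lenlex {(a::'a, b). a < b})" by (rule total_lenlex)
  have "\<forall>x\<in>UNIV. \<forall>y\<in>UNIV. x \<noteq> y \<longrightarrow> (x, y) \<in> lenlex {(a::'a, b). a < b} \<or> (y, x) \<in> lenlex {(a::'a, b). a < b}"
    using t unfolding total_on_def .
  then have "(u, v) \<in> lenlex {(a::'a, b). a < b} \<or> (v, u) \<in> lenlex {(a::'a, b). a < b}" using uv by blast
  then show ?thesis unfolding radix_less_def .
qed

definition SS :: "(nat \<Rightarrow> 'a list) \<Rightarrow> nat \<Rightarrow> nat" where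
  "SS s n = (\<Sum>k<n. length (s k))"

context
  fixes s :: "nat \<Rightarrow> 'a::linorder list" and z :: 'a and y :: "'a list"
  assumes ne: "\<And>n. s n \<noteq> []" and srt: "\<And>n. sorted_wrt (<) (s n)"
    and s0: "s 0 = z # y" and yne: "y \<noteq> []"
begin

lemma SS_Suc: "SS s (Suc n) = SS s n + length (s n)"
  by (simp add: SS_def)

lemma SS_mono: "n < n' \<Longrightarrow> SS s (Suc n) \<le> SS s n'"
proof (induction n' )
  case 0 then show ?case by simp
next
  case (Suc n')
  then show ?case by (cases "n = n'") (auto simp: SS_Suc)
qed

lemma SS_ge: "n \<ge> 1 \<Longrightarrow> SS s n \<ge> n + 1"
proof (induction n)
  case 0 then show ?case by simp
next
  case (Suc n)
  show ?case
  proof (cases n)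
    case 0 then show ?thesis using yne by (simp add: SS_def s0 Suc_leI)
  next
    case (Suc m)
    have "length (s n) \<ge> 1" using ne[of n] by (simp add: Suc_le_eq)
    then show ?thesis using Suc.IH Suc by (simp add: SS_Suc)
  qed
qed

lemma nch_sum: "n \<ge> 1 \<Longrightarrow> 1 + (\<Sum>k<n. nchildren s k) = SS s n"
proof (induction n)
  case 0 then show ?case by simp
next
  case (Suc n)
  show ?case
  proof (cases n)
    case 0 then show ?thesis by (simp add: SS_def nchildren_def s0)
  next
    case (Suc m)
    then show ?thesis using Suc.IH by (simp add: SS_Suc nchildren_def)
  qed
qed

lemma edge_iff:
  "itree_edge s n a = Some m \<longleftrightarrow> (\<exists>j<length (s n). s n ! j = a \<and> m = SS s n + j)"
proof -
  have d: "distinct (s n)" using srt[of n] by (simp add: strict_sorted_iff)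
  show ?thesis
  proof
    assume h: "itree_edge s n a = Some m"
    then have a: "a \<in> set (s n)" by (auto simp: itree_edge_def split: if_splits)
    then obtain j where j: "j < length (s n)" "s n ! j = a" by (auto simp: in_set_conv_nth)
    have th: "(THE j. j < length (s n) \<and> s n ! j = a) = j"
      using j d by (auto intro!: the_equality simp: nth_eq_iff_index_eq)
    have "m = SS s n + j"
      using h a th nch_sum[of n] by (cases "n = 0") (auto simp: itree_edge_def SS_def)
    then show "\<exists>j<length (s n). s n ! j = a \<and> m = SS s n + j" using j by blast
  next
    assume "\<exists>j<length (s n). s n ! j = a \<and> m = SS s n + j"
    then obtain j where j: "j < length (s n)" "s n ! j = a" "m = SS s n + j" by blast
    have th: "(THE j. j < length (s n) \<and> s n ! j = a) = j"
      using j d by (auto intro!: the_equality simp: nth_eq_iff_index_eq)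
    have a: "a \<in> set (s n)" using j by auto
    show "itree_edge s n a = Some m"
      using a th j nch_sum[of n] by (cases "n = 0") (auto simp: itree_edge_def SS_def)
  qed
qed

lemma path_ge: "itree_path s n u = Some m \<Longrightarrow> n \<ge> 1 \<Longrightarrow> m \<ge> n"
proof (induction u arbitrary: n)
  case Nil then show ?case by simp
next
  case (Cons a u)
  then obtain k where k: "itree_edge s n a = Some k" "itree_path s k u = Some m"
    by (auto split: option.splits)
  then obtain j where "k = SS s n + j" using edge_iff by blast
  then have "k \<ge> n + 1" using SS_ge[of n] Cons.prems by simp
  then show ?case using Cons.IH[OF k(2)] by simp
qed

lemma L_snoc: "u @ [a] \<in> itree_lang z s \<Longrightarrow> u \<in> itree_lang z s"
  by (cases u) (auto simp: itree_lang_def path_append split: option.splits)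

lemma L_nonempty_pos:
  assumes "v \<in> itree_lang z s" "v \<noteq> []" "itree_path s 0 v = Some m'"
  shows "m' > 0"
proof -
  obtain a v' where v: "v = a # v'" using assms(2) by (cases v) auto
  have az: "a \<noteq> z" using assms(1) v by (auto simp: itree_lang_def)
  obtain k where k: "itree_edge s 0 a = Some k" "itree_path s k v' = Some m'"
    using assms(3) v by (auto split: option.splits)
  then obtain j where j: "j < length (s 0)" "s 0 ! j = a" "k = j"
    using edge_iff by (auto simp: SS_def)
  have "j \<noteq> 0" using j az s0 by (cases j) auto
  then show ?thesis using path_ge[OF k(2)] j by simp
qed

lemma order_main:
  "length u = k \<Longrightarrow> u \<in> itree_lang z s \<Longrightarrow> v \<in> itree_lang z s \<Longrightarrow>
   itree_path s 0 u = Some m \<Longrightarrow> itree_path s 0 v = Some m' \<Longrightarrow>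
   length u < length v \<or> (length u = length v \<and> (u, v) \<in> lex {(a, b). a < b}) \<Longrightarrow> m < m'"
proof (induction k arbitrary: u v m m')
  case 0
  then have "u = []" by simp
  then have "m = 0" using 0 by simp
  have "v \<noteq> []" using 0 \<open>u = []\<close> by auto
  then show ?case using L_nonempty_pos[OF 0(3) _ 0(5)] \<open>m = 0\<close> by simp
next
  case (Suc k)
  obtain u' a where u: "u = u' @ [a]" using Suc.prems(1) by (cases u rule: rev_exhaust) auto
  have "v \<noteq> []" using Suc.prems(1,6) by auto
  then obtain v' b where v: "v = v' @ [b]" by (cases v rule: rev_exhaust) auto
  obtain n where n: "itree_path s 0 u' = Some n" "itree_edge s n a = Some m"
    using Suc.prems(4) u path_snoc by metis
  obtain n' where n': "itree_path s 0 v' = Some n'" "itree_edge s n' b = Some m'"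
    using Suc.prems(5) v path_snoc by metis
  obtain j where j: "j < length (s n)" "s n ! j = a" "m = SS s n + j" using n(2) edge_iff by blast
  obtain j' where j': "j' < length (s n')" "s n' ! j' = b" "m' = SS s n' + j'" using n'(2) edge_iff by blast
  have uL: "u' \<in> itree_lang z s" using L_snoc Suc.prems(2) u by blast
  have vL: "v' \<in> itree_lang z s" using L_snoc Suc.prems(3) v by blast
  have lenu: "length u' = k" using Suc.prems(1) u by simp
  have key: "n < n' \<Longrightarrow> m < m'"
  proof -
    assume "n < n'"
    then have "SS s (Suc n) \<le> SS s n'" by (rule SS_mono)
    then show "m < m'" using j j' by (simp add: SS_Suc)
  qed
  consider "length u' < length v'" | "length u' = length v'" "(u' @ [a], v' @ [b]) \<in> lex {(a, b). a < b}"
    using Suc.prems(6) u v by auto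
  then show ?case
  proof cases
    case 1
    then show ?thesis using Suc.IH[OF lenu uL vL n(1) n'(1)] key by blast
  next
    case 2
    from lex_snoc[OF 2(2) 2(1)] show ?thesis
    proof
      assume "(u', v') \<in> lex {(a, b). a < b}"
      then show ?thesis using Suc.IH[OF lenu uL vL n(1) n'(1)] key 2(1) by blast
    next
      assume h: "u' = v' \<and> (a, b) \<in> {(a, b). a < b}"
      then have "n = n'" using n n' by simp
      have "j < j'"
      proof (rule ccontr)
        assume "\<not> j < j'"
        then have "j' \<le> j" by simp
        then have "b \<le> a"
          using j j' \<open>n = n'\<close> sorted_wrt_nth_less[OF srt[of n], of j' j]
          by (cases "j' = j") auto
        then show False using h by auto
      qed
      then show ?thesis using j j' \<open>n = n'\<close> by simp
    qed
  qed
qed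

lemma surj_nodes: "\<exists>u \<in> itree_lang z s. itree_path s 0 u = Some m"
proof (induction m rule: less_induct)
  case (less m)
  show ?case
  proof (cases "m = 0")
    case True
    have "[] \<in> itree_lang z s" by (simp add: itree_lang_def)
    then show ?thesis using True by (intro bexI[of _ "[]"]) auto
  next
    case False
    have SSge: "SS s k \<ge> k" for k
      using SS_ge[of k] by (cases k) auto
    have ex: "\<exists>k. m < SS s k" using SSge[of "Suc m"] by (auto simp: Suc_le_eq)
    define k where "k = (LEAST k. m < SS s k)"
    have mk: "m < SS s k" unfolding k_def using ex by (rule LeastI_ex)
    have k0: "k \<noteq> 0" using mk by (cases k) (auto simp: SS_def)
    define n where "n = k - 1"
    have kn: "k = Suc n" using k0 n_def by simp
    have "\<not> m < SS s n" unfolding k_def n_def using k0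
      by (metis (mono_tags, lifting) diff_less k_def less_numeral_extra(1) not_less_Least zero_less_iff_neq_zero)
    then have le: "SS s n \<le> m" by simp
    have lt: "m < SS s n + length (s n)" using mk kn SS_Suc by simp
    define j where "j = m - SS s n"
    have j: "j < length (s n)" "m = SS s n + j" using le lt j_def by auto
    have nm: "n < m"
    proof (cases "n = 0")
      case True then show ?thesis using False by simp
    next
      case False then show ?thesis using SS_ge[of n] le by simp
    qed
    obtain u where u: "u \<in> itree_lang z s" "itree_path s 0 u = Some n" using less.IH[OF nm] by blast
    have e: "itree_edge s n (s n ! j) = Some m" using edge_iff j by blast
    have p: "itree_path s 0 (u @ [s n ! j]) = Some m" using u(2) e by (simp add: path_append)
    have hd: "hd (u @ [s n ! j]) \<noteq> z"
    proof (cases "u = []")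
      case True
      then have "n = 0" using u by simp
      then have "j \<noteq> 0" using j \<open>m \<noteq> 0\<close> by (simp add: SS_def)
      then have "s 0 ! 0 < s 0 ! j" using sorted_wrt_nth_less[OF srt[of 0], of 0 j] j \<open>n = 0\<close> by simp
      then show ?thesis using True \<open>n = 0\<close> s0 by auto
    next
      case False
      then show ?thesis using u(1) by (auto simp: itree_lang_def)
    qed
    show ?thesis using p hd by (auto simp: itree_lang_def intro!: bexI[of _ "u @ [s n ! j]"])
  qed
qed

lemma path_L: "u \<in> itree_lang z s \<Longrightarrow> itree_path s 0 u = Some (the (itree_path s 0 u))"
  by (auto simp: itree_lang_def)

lemma radix_mono:
  assumes "u \<in> itree_lang z s" "v \<in> itree_lang z s" "radix_less u v"
  shows "the (itree_path s 0 u) < the (itree_path s 0 v)"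
  using order_main[OF refl assms(1,2) path_L[OF assms(1)] path_L[OF assms(2)]] assms(3)
  by (auto simp: radix_less_def lenlex_conv)

lemma nd_inj: "u \<in> itree_lang z s \<Longrightarrow> v \<in> itree_lang z s \<Longrightarrow>
  the (itree_path s 0 u) = the (itree_path s 0 v) \<Longrightarrow> u = v"
  using radix_total radix_mono by (metis less_irrefl)

lemma card_eq:
  assumes uL: "u \<in> itree_lang z s"
  shows "card {v \<in> itree_lang z s. radix_less v u} = the (itree_path s 0 u)"
proof -
  let ?nd = "\<lambda>v. the (itree_path s 0 v)"
  have "bij_betw ?nd {v \<in> itree_lang z s. radix_less v u} {..<?nd u}"
  proof (rule bij_betw_imageI)
    show "inj_on ?nd {v \<in> itree_lang z s. radix_less v u}"
      using nd_inj by (auto intro: inj_onI)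
    show "?nd ` {v \<in> itree_lang z s. radix_less v u} = {..<?nd u}"
    proof
      show "?nd ` {v \<in> itree_lang z s. radix_less v u} \<subseteq> {..<?nd u}"
        using radix_mono uL by auto
      show "{..<?nd u} \<subseteq> ?nd ` {v \<in> itree_lang z s. radix_less v u}"
      proof
        fix m assume "m \<in> {..<?nd u}"
        then have m: "m < ?nd u" by simp
        obtain v where v: "v \<in> itree_lang z s" "itree_path s 0 v = Some m" using surj_nodes by blast
        have "v \<noteq> u" using m v by auto
        have "\<not> radix_less u v" using radix_mono[OF uL v(1)] m v by auto
        then have "radix_less v u" using radix_total \<open>v \<noteq> u\<close> by blast
        then show "m \<in> ?nd ` {v \<in> itree_lang z s. radix_less v u}"
          using v by (auto intro!: image_eqI[of _ _ v])
      qed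
    qed
  qed
  then show ?thesis by (simp add: bij_betw_same_card)
qed

lemma rep_node:
  "itree_path s 0 (rep_ans (itree_lang z s) n) = Some n"
proof -
  obtain u where u: "u \<in> itree_lang z s" "itree_path s 0 u = Some n" using surj_nodes by blast
  have "rep_ans (itree_lang z s) n = u"
    unfolding rep_ans_def
  proof (rule the_equality)
    show "u \<in> itree_lang z s \<and> card {v \<in> itree_lang z s. radix_less v u} = n"
      using u card_eq by simp
    fix u' assume "u' \<in> itree_lang z s \<and> card {v \<in> itree_lang z s. radix_less v u'} = n"
    then show "u' = u" using card_eq u nd_inj by (metis option.sel)
  qed
  then show ?thesis using u by simp
qed

end

theorem mainTheorem3:
  fixes r :: nat and A :: "'a::linorder set" and z :: 'a
    and w :: "nat \<Rightarrow> 'a list"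
    and Q :: "'q set" and q0 :: 'q and \<delta> :: "'q \<Rightarrow> 'a \<Rightarrow> 'q"
    and x :: "nat \<Rightarrow> 'q"
  assumes "r \<ge> 1"
    and "finite A" and "z \<in> A" and "\<forall>a\<in>A. z \<le> a"
    and "\<forall>i<r. w i \<noteq> [] \<and> inc_word A (w i)"
    and "\<exists>y. y \<noteq> [] \<and> w 0 = z # y"
    and "finite Q" and "q0 \<in> Q" and "\<forall>q\<in>Q. \<forall>a\<in>A. \<delta> q a \<in> Q"
    and "alt_fixed_point r (\<lambda>i q. map (\<delta> q) (w i)) x"
    and "x 0 = q0"
  shows "\<forall>n. x n = delta_star \<delta> q0 (rep_ans (itree_lang z (psig r w)) n)"
proof -
  define s where "s = psig r w"
  obtain y where y: "y \<noteq> []" "w 0 = z # y" using assms(6) by blast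
  have modr: "n mod r < r" for n using assms(1) by simp
  have ne: "\<And>n. s n \<noteq> []" using assms(5) modr by (simp add: s_def psig_def)
  have srt: "\<And>n. sorted_wrt (<) (s n)" using assms(5) modr by (simp add: s_def psig_def inc_word_def)
  have s0: "s 0 = z # y" using y by (simp add: s_def psig_def)
  note E = edge_iff[of s, OF ne srt s0 y(1)]
  have afp: "\<And>i j. j < length (s i) \<Longrightarrow> x (SS s i + j) = \<delta> (x i) (s i ! j)"
    using assms(10) by (simp add: alt_fixed_point_def SS_def s_def psig_def)
  have xp: "\<forall>m. itree_path s 0 u = Some m \<longrightarrow> x m = delta_star \<delta> q0 u" for u
  proof (induction u rule: rev_induct)
    case Nil then show ?case using assms(11) by (simp add: delta_star_def)
  next
    case (snoc a u)
    show ?case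
    proof (intro allI impI)
      fix m assume "itree_path s 0 (u @ [a]) = Some m"
      then obtain n where n: "itree_path s 0 u = Some n" "itree_edge s n a = Some m"
        using path_snoc by metis
      obtain j where j: "j < length (s n)" "s n ! j = a" "m = SS s n + j" using n(2) E by blast
      have "x m = \<delta> (x n) a" using afp j by simp
      also have "\<dots> = delta_star \<delta> q0 (u @ [a])" using snoc n(1) by (simp add: delta_star_def)
      finally show "x m = delta_star \<delta> q0 (u @ [a])" .
    qed
  qed
  show ?thesis
    using xp rep_node[of s z y, OF ne srt s0 y(1)] by (simp add: s_def)
qed

end
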